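(* (a) If a topological $G$-system $(X,T)$ is CAM, then it is weakly CAM. (b) If a $\mathbb{Z}$-system $(X,T)$ is expansive and weakly CAM, then it is CAM.
   Context: Let $G$ be a countable discrete group. A topological $G$-system $(X,T)$ consists of a compact metric space $X$ and an action $T\colon G\to\mathrm{Homeo}(X)$, $g\mapsto T_g$; a $\mathbb{Z}$-system is given by one homeomorphism $T$. The system is topologically transitive if for all nonempty open $U,V\subseteq X$ there is $g\in G$ with $T_gU\cap V\neq\emptyset$; the action is faithful if $T_g=\mathrm{id}_X$ only when $g$ is the identity. A point is periodic if its $G$-orbit is finite. The system is chaotic almost minimal (CAM) if: (1) it is topologically transitive and the action is faithful; (2) the periodic points are dense in $X$; (3) every proper closed $T$-invariant subset of $X$ is finite. It is weakly CAM if (1) and (2) hold and (3') every point of $X$ has $G$-orbit that is either finite or dense in $X$. A $\mathbb{Z}$-system is expansive if there is $c>0$ such that for all $x\neq y$ there is $n\in\mathbb{Z}$ with $d(T^nx,T^ny)>c$. *)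

theory Defs
  imports "HOL-Analysis.Analysis" "HOL-Library.Countable"
begin

definition G_system :: "'x::metric_space set \<Rightarrow> ('g::{group_add,countable} \<Rightarrow> 'x \<Rightarrow> 'x) \<Rightarrow> bool" where
  "G_system X T \<longleftrightarrow> compact X
     \<and> (\<forall>g. homeomorphism X X (T g) (T (- g)))
     \<and> (\<forall>x\<in>X. T 0 x = x)
     \<and> (\<forall>g h. \<forall>x\<in>X. T (g + h) x = T g (T h x))"

definition orbit :: "('g \<Rightarrow> 'x \<Rightarrow> 'x) \<Rightarrow> 'x \<Rightarrow> 'x set" where
  "orbit T x = range (\<lambda>g. T g x)"

definition top_transitive :: "'x::metric_space set \<Rightarrow> ('g \<Rightarrow> 'x \<Rightarrow> 'x) \<Rightarrow> bool" where
  "top_transitive X T \<longleftrightarrow>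
     (\<forall>U V. openin (top_of_set X) U \<and> U \<noteq> {} \<and> openin (top_of_set X) V \<and> V \<noteq> {}
        \<longrightarrow> (\<exists>g. T g ` U \<inter> V \<noteq> {}))"

definition faithful :: "'x set \<Rightarrow> ('g::group_add \<Rightarrow> 'x \<Rightarrow> 'x) \<Rightarrow> bool" where
  "faithful X T \<longleftrightarrow> (\<forall>g. (\<forall>x\<in>X. T g x = x) \<longrightarrow> g = 0)"

definition periodic_points :: "'x set \<Rightarrow> ('g \<Rightarrow> 'x \<Rightarrow> 'x) \<Rightarrow> 'x set" where
  "periodic_points X T = {x\<in>X. finite (orbit T x)}"

definition invariant_set :: "('g \<Rightarrow> 'x \<Rightarrow> 'x) \<Rightarrow> 'x set \<Rightarrow> bool" where
  "invariant_set T A \<longleftrightarrow> (\<forall>g. T g ` A \<subseteq> A)"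

definition CAM :: "'x::metric_space set \<Rightarrow> ('g::{group_add,countable} \<Rightarrow> 'x \<Rightarrow> 'x) \<Rightarrow> bool" where
  "CAM X T \<longleftrightarrow> top_transitive X T \<and> faithful X T
     \<and> X \<subseteq> closure (periodic_points X T)
     \<and> (\<forall>A. closedin (top_of_set X) A \<and> A \<subset> X \<and> invariant_set T A \<longrightarrow> finite A)"

definition weakly_CAM :: "'x::metric_space set \<Rightarrow> ('g::{group_add,countable} \<Rightarrow> 'x \<Rightarrow> 'x) \<Rightarrow> bool" where
  "weakly_CAM X T \<longleftrightarrow> top_transitive X T \<and> faithful X T
     \<and> X \<subseteq> closure (periodic_points X T)
     \<and> (\<forall>x\<in>X. finite (orbit T x) \<or> X \<subseteq> closure (orbit T x))"

text \<open>The Z-action generated by a homeomorphism f of X with inverse f'.\<close>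
definition zact :: "('x \<Rightarrow> 'x) \<Rightarrow> ('x \<Rightarrow> 'x) \<Rightarrow> int \<Rightarrow> 'x \<Rightarrow> 'x" where
  "zact f f' n = (if n \<ge> 0 then f ^^ nat n else f' ^^ nat (- n))"

definition expansive :: "'x::metric_space set \<Rightarrow> ('x \<Rightarrow> 'x) \<Rightarrow> ('x \<Rightarrow> 'x) \<Rightarrow> bool" where
  "expansive X f f' \<longleftrightarrow> (\<exists>c>0. \<forall>x\<in>X. \<forall>y\<in>X. x \<noteq> y \<longrightarrow>
      (\<exists>n::int. dist (zact f f' n x) (zact f f' n y) > c))"

end

theory Submission
  imports Defs
begin

lemma funpow_in: "(\<forall>z\<in>Y. g z \<in> Y) \<Longrightarrow> z \<in> Y \<Longrightarrow> (g ^^ k) z \<in> Y"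
  by (induction k) auto

lemma funpow_cont: "continuous_on Y g \<Longrightarrow> g ` Y \<subseteq> Y \<Longrightarrow> continuous_on Y (g ^^ k)"
proof (induction k)
  case 0 then show ?case by (simp add: continuous_on_id)
next
  case (Suc k)
  have sub: "(g ^^ k) ` Y \<subseteq> Y" using funpow_in[of Y g] Suc.prems by blast
  have "continuous_on Y (g \<circ> (g ^^ k))"
    by (rule continuous_on_compose) (use Suc continuous_on_subset sub in auto)
  then show ?case by simp
qed

context
  fixes Y :: "'y::metric_space set" and f f' :: "'y \<Rightarrow> 'y"
  assumes hom: "homeomorphism Y Y f f'"
begin

lemma fY: "z \<in> Y \<Longrightarrow> f z \<in> Y" and f'Y: "z \<in> Y \<Longrightarrow> f' z \<in> Y"
  and ff': "z \<in> Y \<Longrightarrow> f (f' z) = z" and f'f: "z \<in> Y \<Longrightarrow> f' (f z) = z"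
  using hom unfolding homeomorphism_def by auto

lemma zact_in: "z \<in> Y \<Longrightarrow> zact f f' n z \<in> Y"
  unfolding zact_def using funpow_in[of Y f] funpow_in[of Y f'] fY f'Y by auto

lemma zact_cont: "continuous_on Y (zact f f' n)"
proof -
  have "continuous_on Y f" "continuous_on Y f'" "f ` Y \<subseteq> Y" "f' ` Y \<subseteq> Y"
    using hom unfolding homeomorphism_def by auto
  then show ?thesis unfolding zact_def using funpow_cont by auto
qed

lemma zact_0: "zact f f' 0 z = z"
  unfolding zact_def by simp

lemma zact_succ: assumes "z \<in> Y" shows "zact f f' (n + 1) z = f (zact f f' n z)"
proof (cases "n \<ge> 0")
  case True
  then have "nat (n+1) = Suc (nat n)" by simp
  then show ?thesis using True unfolding zact_def by simp
next
  case False
  show ?thesis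
  proof (cases "n = -1")
    case True
    then show ?thesis unfolding zact_def using ff'[OF assms] by simp
  next
    case False2: False
    have e: "nat (- n) = Suc (nat (- (n+1)))" using False by simp
    have "(f' ^^ nat (- (n+1))) z \<in> Y" using funpow_in[of Y f'] f'Y assms by blast
    then show ?thesis using False False2 e ff' unfolding zact_def by simp
  qed
qed

lemma zact_pred: assumes "z \<in> Y" shows "zact f f' (n - 1) z = f' (zact f f' n z)"
proof -
  have "f' (zact f f' n z) = f' (zact f f' ((n - 1) + 1) z)" by simp
  also have "\<dots> = f' (f (zact f f' (n - 1) z))" using zact_succ[OF assms, of "n - 1"] by (simp del: diff_add_cancel)
  also have "\<dots> = zact f f' (n - 1) z" using f'f zact_in assms by simp
  finally show ?thesis by simp
qed

lemma zact_add: assumes "z \<in> Y" shows "zact f f' (m + n) z = zact f f' m (zact f f' n z)"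
proof (induction m rule: int_induct[where k=0])
  case base then show ?case by (simp add: zact_0)
next
  case (step1 i)
  have "zact f f' (i + 1 + n) z = zact f f' ((i + n) + 1) z" by (simp add: algebra_simps)
  also have "\<dots> = f (zact f f' (i + n) z)" using zact_succ zact_in assms by simp
  also have "\<dots> = zact f f' (i+1) (zact f f' n z)" using step1 zact_succ zact_in assms by simp
  finally show ?case .
next
  case (step2 i)
  have "zact f f' (i - 1 + n) z = zact f f' ((i + n) - 1) z" by (simp add: algebra_simps)
  also have "\<dots> = f' (zact f f' (i + n) z)" using zact_pred zact_in assms by simp
  also have "\<dots> = zact f f' (i - 1) (zact f f' n z)" using step2 zact_pred zact_in assms by simp
  finally show ?case .
qed

lemma zact_period: assumes "z \<in> Y" "finite (orbit (zact f f') z)"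
  shows "\<exists>P>0. zact f f' P z = z"
proof -
  let ?g = "\<lambda>k::nat. zact f f' (int k) z"
  have "range ?g \<subseteq> orbit (zact f f') z" unfolding orbit_def by auto
  then have "finite (range ?g)" using assms(2) finite_subset by blast
  then have "\<not> inj ?g" using finite_imageD by auto
  then obtain a b where ab: "a \<noteq> b" "?g a = ?g b" unfolding inj_def by blast
  then obtain a b where ab: "a < b" "?g a = ?g b"
    by (metis nat_neq_iff)
  have "zact f f' (int b - int a) z = zact f f' (- int a) (?g b)"
    using zact_add[OF assms(1), of "- int a" "int b"] by simp
  also have "\<dots> = zact f f' (- int a) (?g a)" using ab by simp
  also have "\<dots> = z" using zact_add[OF assms(1), of "- int a" "int a"] by (simp add: zact_0)
  finally show ?thesis using ab(1) by (intro exI[of _ "int b - int a"]) auto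
qed

lemma zact_mult: assumes "z \<in> Y" "zact f f' P z = z"
  shows "zact f f' (j + int k * P) z = zact f f' j z"
proof (induction k)
  case 0 then show ?case by simp
next
  case (Suc k)
  have "zact f f' (j + int (Suc k) * P) z = zact f f' ((j + int k * P) + P) z"
    by (simp add: algebra_simps)
  also have "\<dots> = zact f f' (j + int k * P) z" using zact_add[OF assms(1)] assms(2) by simp
  finally show ?case using Suc by simp
qed

end


lemma partA:
  fixes X :: "'x::metric_space set" and T :: "'g::{group_add,countable} \<Rightarrow> 'x \<Rightarrow> 'x"
  assumes G: "G_system X T" and C: "CAM X T"
  shows "weakly_CAM X T"
proof -
  have cX: "compact X" and hom: "\<And>g. homeomorphism X X (T g) (T (- g))"
    and law: "\<And>g h x. x \<in> X \<Longrightarrow> T (g + h) x = T g (T h x)"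
    using G unfolding G_system_def by auto
  have TX: "\<And>g x. x \<in> X \<Longrightarrow> T g x \<in> X" using hom unfolding homeomorphism_def by blast
  have Tc: "\<And>g. continuous_on X (T g)" using hom unfolding homeomorphism_def by blast
  have fin: "\<And>A. closedin (top_of_set X) A \<Longrightarrow> A \<subset> X \<Longrightarrow> invariant_set T A \<Longrightarrow> finite A"
    using C unfolding CAM_def by blast
  have "X \<subseteq> closure (orbit T x)" if x: "x \<in> X" and inf: "infinite (orbit T x)" for x
  proof -
    let ?O = "orbit T x"
    have OX: "?O \<subseteq> X" using TX x unfolding orbit_def by auto
    have clX: "closed X" using cX compact_imp_closed by blast
    have CX: "closure ?O \<subseteq> X" using OX clX closure_minimal by blast
    have cin: "closedin (top_of_set X) (closure ?O)"
      unfolding closedin_closed using CX by (intro exI[of _ "closure ?O"]) auto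
    have inv: "invariant_set T (closure ?O)"
      unfolding invariant_set_def
    proof
      fix g
      have "T g ` ?O \<subseteq> ?O"
      proof
        fix z assume "z \<in> T g ` ?O"
        then obtain h where "z = T g (T h x)" unfolding orbit_def by blast
        then have "z = T (g + h) x" using law[OF x] by simp
        then show "z \<in> ?O" unfolding orbit_def by blast
      qed
      then have "T g ` ?O \<subseteq> closure ?O" using closure_subset by blast
      then show "T g ` closure ?O \<subseteq> closure ?O"
        by (intro image_closure_subset continuous_on_subset[OF Tc CX]) auto
    qed
    have "\<not> closure ?O \<subset> X"
    proof
      assume "closure ?O \<subset> X"
      then have "finite (closure ?O)" using fin cin inv by blast
      then show False using inf closure_subset finite_subset by blast
    qed
    then show ?thesis using CX by blast
  qed
  then show ?thesis using C unfolding CAM_def weakly_CAM_def by blast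
qed

lemma partB:
  fixes Y :: "'y::metric_space set" and f f' :: "'y \<Rightarrow> 'y"
  assumes cY: "compact Y" and hom: "homeomorphism Y Y f f'" and ex: "expansive Y f f'"
    and W: "weakly_CAM Y (zact f f')"
  shows "CAM Y (zact f f')"
proof -
  let ?F = "zact f f'"
  obtain c where c: "c > 0" "\<And>x y. x \<in> Y \<Longrightarrow> y \<in> Y \<Longrightarrow> x \<noteq> y \<Longrightarrow> \<exists>n. dist (?F n x) (?F n y) > c"
    using ex unfolding expansive_def by blast
  have dense: "\<And>x. x \<in> Y \<Longrightarrow> finite (orbit ?F x) \<or> Y \<subseteq> closure (orbit ?F x)"
    using W unfolding weakly_CAM_def by blast
  have "finite A" if cA: "closedin (top_of_set Y) A" and AY: "A \<subset> Y" and iA: "invariant_set ?F A" for A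
  proof (rule ccontr)
    assume infA: "infinite A"
    have compA: "compact A" using closedin_compact[OF cY cA] .
    have clA: "closed A" using compA compact_imp_closed by blast
    have AsY: "A \<subseteq> Y" using AY by blast
    have FA: "\<And>n z. z \<in> A \<Longrightarrow> ?F n z \<in> A" using iA unfolding invariant_set_def by blast
    have orbA: "\<And>z. z \<in> A \<Longrightarrow> orbit ?F z \<subseteq> A" unfolding orbit_def using FA by blast
    have per: "finite (orbit ?F z)" if z: "z \<in> A" for z
    proof (rule ccontr)
      assume "infinite (orbit ?F z)"
      then have "Y \<subseteq> closure (orbit ?F z)" using dense z AsY by blast
      also have "\<dots> \<subseteq> A" using orbA[OF z] clA closure_minimal by blast
      finally show False using AY by blast
    qed
    have perP: "\<exists>P>0. ?F P z = z" if "z \<in> A" for z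
      using zact_period[OF hom] per that AsY by blast
    have peri: "?F (j + int k * P) z = ?F j z" if "z \<in> A" "?F P z = z" for z j k P
      using zact_mult[OF hom] that AsY by blast
    obtain x where xA: "x \<in> A" and xl: "x islimpt A"
      using compA infA unfolding compact_eq_Bolzano_Weierstrass by blast
    have xY: "x \<in> Y" using xA AsY by blast
    obtain Px where Px: "Px > 0" "?F Px x = x" using perP[OF xA] by blast
    let ?O = "orbit ?F x"
    have finO: "finite ?O" using per[OF xA] .
    have OA: "?O \<subseteq> A" using orbA[OF xA] .
    have key: "\<exists>w x'. w \<in> A \<and> x' \<in> ?O \<and> dist w x' > c \<and>
        (\<forall>m\<in>{1..N}. dist (?F (- int m) w) (?F (- int m) x') \<le> c)" for N :: nat
    proof -
      have "\<forall>\<^sub>F z in at x within Y. \<forall>i\<in>{1..N}. dist (?F (int i) z) (?F (int i) x) < c"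
      proof (rule eventually_ball_finite, simp, rule ballI)
        fix i assume "i \<in> {1..N}"
        have "(?F (int i) \<longlongrightarrow> ?F (int i) x) (at x within Y)"
          using zact_cont[OF hom] xY continuous_on_def by blast
        then show "\<forall>\<^sub>F z in at x within Y. dist (?F (int i) z) (?F (int i) x) < c"
          using tendstoD c(1) by blast
      qed
      then obtain d where d: "d > 0" "\<And>z. z \<in> Y \<Longrightarrow> z \<noteq> x \<Longrightarrow> dist z x < d \<Longrightarrow>
           \<forall>i\<in>{1..N}. dist (?F (int i) z) (?F (int i) x) < c"
        unfolding eventually_at by blast
      obtain y where y: "y \<in> A" "y \<noteq> x" "dist y x < d"
        using xl d(1) unfolding islimpt_approachable by blast
      have yY: "y \<in> Y" using y AsY by blast
      have close: "\<forall>i\<in>{1..N}. dist (?F (int i) y) (?F (int i) x) < c" using d y yY by blast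
      obtain Py where Py: "Py > 0" "?F Py y = y" using perP[OF y(1)] by blast
      define P where "P = Px * Py"
      have P0: "P > 0" using Px Py unfolding P_def by simp
      have Pxx: "?F P x = x" using peri[OF xA Px(2), of 0 "nat Py"] Py(1) zact_0[OF hom]
        unfolding P_def by (simp add: mult.commute)
      have Pyy: "?F P y = y" using peri[OF y(1) Py(2), of 0 "nat Px"] Px(1) zact_0[OF hom]
        unfolding P_def by simp
      obtain i0 where i0: "dist (?F i0 y) (?F i0 x) > c" using c(2)[OF yY xY y(2)] by blast
      define k where "k = nat \<bar>i0\<bar> + 1"
      have "int k * P \<ge> int k" using P0 mult_left_mono[of 1 P "int k"] by simp
      then have i1pos: "i0 + int k * P > 0" unfolding k_def by linarith
      have "dist (?F (i0 + int k * P) y) (?F (i0 + int k * P) x) > c"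
        using i0 peri[OF y(1) Pyy] peri[OF xA Pxx] by simp
      then have Sne: "nat (i0 + int k * P) > 0 \<and> dist (?F (int (nat (i0 + int k * P))) y) (?F (int (nat (i0 + int k * P))) x) > c"
        using i1pos by simp
      define S where "S = (\<lambda>n::nat. n > 0 \<and> dist (?F (int n) y) (?F (int n) x) > c)"
      define n where "n = (LEAST n. S n)"
      have "S (nat (i0 + int k * P))" using Sne unfolding S_def by blast
      then have Sn: "S n" unfolding n_def by (rule LeastI)
      have minS: "\<And>j. j < n \<Longrightarrow> \<not> S j" unfolding n_def using not_less_Least by blast
      have nN: "n > N"
      proof (rule ccontr)
        assume "\<not> n > N"
        then have "n \<in> {1..N}" using Sn unfolding S_def by auto
        then show False using close Sn unfolding S_def by fastforce
      qed
      have wA: "?F (int n) y \<in> A" using FA y(1) by blast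
      have xO: "?F (int n) x \<in> ?O" unfolding orbit_def by blast
      have "dist (?F (- int m) (?F (int n) y)) (?F (- int m) (?F (int n) x)) \<le> c"
        if m: "m \<in> {1..N}" for m
      proof -
        have e1: "?F (- int m) (?F (int n) y) = ?F (int (n - m)) y"
          using zact_add[OF hom yY, of "- int m" "int n"] m nN by (simp add: of_nat_diff)
        have e2: "?F (- int m) (?F (int n) x) = ?F (int (n - m)) x"
          using zact_add[OF hom xY, of "- int m" "int n"] m nN by (simp add: of_nat_diff)
        have "\<not> S (n - m)" using minS m nN by auto
        moreover have "n - m > 0" using m nN by auto
        ultimately show ?thesis unfolding e1 e2 S_def by auto
      qed
      then show ?thesis using wA xO Sn unfolding S_def by blast
    qed
    define Q where "Q = (\<lambda>N p. fst p \<in> A \<and> snd p \<in> ?O \<and> dist (fst p) (snd p) > c \<and>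
        (\<forall>m\<in>{1..N}. dist (?F (- int m) (fst p)) (?F (- int m) (snd p)) \<le> c))"
    have "\<forall>N. \<exists>p. Q N p" unfolding Q_def using key by fastforce
    then obtain g where g: "\<And>N. Q N (g N)" using choice by blast
    define Wf where "Wf = (\<lambda>N. fst (g N))"
    define Xf where "Xf = (\<lambda>N. snd (g N))"
    have WX: "\<And>N. Wf N \<in> A \<and> Xf N \<in> ?O \<and> dist (Wf N) (Xf N) > c \<and>
        (\<forall>m\<in>{1..N}. dist (?F (- int m) (Wf N)) (?F (- int m) (Xf N)) \<le> c)"
      using g unfolding Q_def Wf_def Xf_def by blast
    have inS: "\<And>N. (Wf N, Xf N) \<in> A \<times> ?O" using WX by blast
    have "compact (A \<times> ?O)" using compA finO by (simp add: compact_Times finite_imp_compact)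
    then obtain l r where l: "l \<in> A \<times> ?O" and r: "strict_mono r"
      and lim: "((\<lambda>N. (Wf N, Xf N)) \<circ> r) \<longlonglongrightarrow> l"
      using compact_def[THEN iffD1, rule_format, of _ "\<lambda>N. (Wf N, Xf N)", OF _ inS] by blast
    obtain w x' where lwx: "l = (w, x')" by (cases l)
    have wA: "w \<in> A" and x'O: "x' \<in> ?O" using l lwx by auto
    have wY: "w \<in> Y" and x'Y: "x' \<in> Y" using wA x'O OA AsY by auto
    have lw: "(\<lambda>k. Wf (r k)) \<longlonglongrightarrow> w" and lx: "(\<lambda>k. Xf (r k)) \<longlonglongrightarrow> x'"
      using tendsto_fst[OF lim] tendsto_snd[OF lim] lwx by (auto simp: o_def)
    have WY: "\<And>k. Wf k \<in> Y" "\<And>k. Xf k \<in> Y" using WX OA AsY by blast+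
    have bound: "dist (?F j w) (?F j x') \<le> c" if j: "j < 0" for j
    proof -
      define m where "m = nat (- j)"
      have jm: "j = - int m" "m \<ge> 1" using j unfolding m_def by auto
      have t1: "(\<lambda>k. ?F j (Wf (r k))) \<longlonglongrightarrow> ?F j w"
        by (rule continuous_on_tendsto_compose[OF zact_cont[OF hom] lw wY]) (use WY in auto)
      have t2: "(\<lambda>k. ?F j (Xf (r k))) \<longlonglongrightarrow> ?F j x'"
        by (rule continuous_on_tendsto_compose[OF zact_cont[OF hom] lx x'Y]) (use WY in auto)
      have "\<forall>k\<ge>m. dist (?F j (Wf (r k))) (?F j (Xf (r k))) \<le> c"
      proof (intro allI impI)
        fix k assume "k \<ge> m"
        then have "m \<le> r k" using seq_suble[OF r, of k] by linarith
        then show "dist (?F j (Wf (r k))) (?F j (Xf (r k))) \<le> c" using WX[of "r k"] jm by auto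
      qed
      then show ?thesis using LIMSEQ_le_const2[OF tendsto_dist[OF t1 t2]] by blast
    qed
    have d0: "dist w x' \<ge> c"
    proof -
      have "\<forall>k\<ge>0. c \<le> dist (Wf (r k)) (Xf (r k))" using WX less_imp_le by blast
      then show ?thesis using LIMSEQ_le_const[OF tendsto_dist[OF lw lx]] by blast
    qed
    have x'A: "x' \<in> A" using x'O OA by blast
    obtain Pw where Pw: "Pw > 0" "?F Pw w = w" using perP[OF wA] by blast
    obtain Pz where Pz: "Pz > 0" "?F Pz x' = x'" using perP[OF x'A] by blast
    define P where "P = Pw * Pz"
    have P0: "P > 0" using Pw Pz unfolding P_def by simp
    have Pww: "?F P w = w" using peri[OF wA Pw(2), of 0 "nat Pz"] Pz(1) zact_0[OF hom]
      unfolding P_def by (simp add: mult.commute)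
    have Pxx: "?F P x' = x'" using peri[OF x'A Pz(2), of 0 "nat Pw"] Pw(1) zact_0[OF hom]
      unfolding P_def by simp
    have all: "dist (?F j w) (?F j x') \<le> c" for j
    proof -
      define k where "k = nat \<bar>j\<bar> + 1"
      have "int k * P \<ge> int k" using P0 mult_left_mono[of 1 P "int k"] by simp
      then have neg: "j - int k * P < 0" unfolding k_def by linarith
      have "?F j w = ?F ((j - int k * P) + int k * P) w" by simp
      also have "\<dots> = ?F (j - int k * P) w" using peri[OF wA Pww] by blast
      finally have e1: "?F j w = ?F (j - int k * P) w" .
      have "?F j x' = ?F ((j - int k * P) + int k * P) x'" by simp
      also have "\<dots> = ?F (j - int k * P) x'" using peri[OF x'A Pxx] by blast
      finally have e2: "?F j x' = ?F (j - int k * P) x'" .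
      show ?thesis unfolding e1 e2 using bound[OF neg] .
    qed
    have "w = x'" using c(2)[OF wY x'Y] all by (meson not_le)
    then show False using d0 c(1) by simp
  qed
  then show ?thesis using W unfolding weakly_CAM_def CAM_def by blast
qed

theorem proposition2p15:
  fixes X :: "'x::metric_space set" and T :: "'g::{group_add,countable} \<Rightarrow> 'x \<Rightarrow> 'x"
    and Y :: "'y::metric_space set" and f f' :: "'y \<Rightarrow> 'y"
  shows "(G_system X T \<and> CAM X T \<longrightarrow> weakly_CAM X T)
       \<and> (compact Y \<and> homeomorphism Y Y f f' \<and> expansive Y f f' \<and> weakly_CAM Y (zact f f')
           \<longrightarrow> CAM Y (zact f f'))"
  using partA partB by blast

end
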